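(* Let $r>0$ be real. For every integer $N\ge1$, $$g_r=\frac{m}{(m+1)^{r+1}}\left\{\sum_{k=0}^{N-1}(-1)^k\frac{\tilde\mu_k}{(m+1)^k}\binom{r+k}{r}+O\!\left(m^{-\lceil N/2\rceil}\right)\right\}\quad\text{as } m\to\infty.$$
   Context: For $m>0$, $g_r=\sum_{s=1}^\infty e^{-m}\frac{m^s}{s!}\,s^{-r}$ (the $r$-th inverse moment of the positive Poisson distribution times $1-e^{-m}$), and $\tilde\mu_k=\sum_{s=0}^\infty e^{-m}\frac{m^s}{s!}(s-m)^k$ is the $k$-th central moment of the Poisson distribution with mean $m$. For non-integer $r$, $\binom{r+k}{r}:=(r+1)(r+2)\cdots(r+k)/k!$ (and $=1$ for $k=0$). $\lceil x\rceil$ is the ceiling of $x$. *)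

theory Defs
  imports "HOL-Analysis.Analysis" "HOL-Library.Landau_Symbols"
begin

definition poisson_w :: "real \<Rightarrow> nat \<Rightarrow> real" where
  "poisson_w m s = exp (- m) * m ^ s / fact s"

definition g_inv :: "real \<Rightarrow> real \<Rightarrow> real" where
  "g_inv r m = (\<Sum>s. poisson_w m (Suc s) * real (Suc s) powr (- r))"

definition mu_central :: "nat \<Rightarrow> real \<Rightarrow> real" where
  "mu_central k m = (\<Sum>s. poisson_w m s * (real s - m) ^ k)"

text \<open>binom(r+k, r) := (r+1)(r+2)...(r+k)/k!\<close>
definition binom_r :: "real \<Rightarrow> nat \<Rightarrow> real" where
  "binom_r r k = pochhammer (r + 1) k / fact k"

end

theory Submission
  imports Defs
begin

lemma pw_nonneg: "m \<ge> 0 \<Longrightarrow> poisson_w m s \<ge> 0"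
  by (simp add: poisson_w_def)

lemma pw_Suc: "poisson_w m (Suc s) = poisson_w m s * m / real (Suc s)"
  by (simp add: poisson_w_def field_simps)

lemma pw_sums: "(\<lambda>s. poisson_w m s) sums 1"
proof -
  have "(\<lambda>s. exp (-m) * (m^s / fact s)) sums (exp (-m) * exp m)"
    using exp_converges[of m] by (intro sums_mult) (simp add: scaleR_conv_of_real divide_inverse mult.commute)
  then show ?thesis by (simp add: poisson_w_def exp_minus field_simps)
qed

lemma pw_geom_summable: "summable (\<lambda>s. poisson_w m s * B ^ s)"
proof -
  have "summable (\<lambda>s. exp (-m) * (inverse (fact s) * (m*B)^s))"
    by (intro summable_mult summable_exp)
  then show ?thesis by (simp add: poisson_w_def power_mult_distrib field_simps)
qed

lemma pow_le_exp: "(x::real) \<ge> 0 \<Longrightarrow> x ^ k \<le> fact k * exp x"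
proof -
  assume x: "x \<ge> 0"
  have s: "summable (\<lambda>n. x^n / fact n)"
    using exp_converges[of x] by (simp add: sums_iff scaleR_conv_of_real divide_inverse mult.commute)
  have e: "exp x = (\<Sum>n. x^n / fact n)"
    using exp_converges[of x] by (simp add: sums_iff scaleR_conv_of_real divide_inverse mult.commute)
  have "(\<Sum>n\<in>{k}. x^n / fact n) \<le> (\<Sum>n. x^n / fact n)"
    by (rule sum_le_suminf[OF s]) (use x in auto)
  then have "x^k / fact k \<le> exp x" using e by simp
  then show ?thesis by (simp add: field_simps)
qed

lemma mom_summable:
  assumes m: "m \<ge> 0"
  shows "summable (\<lambda>s. poisson_w m s * (real s + c - m) ^ k)"
proof (rule summable_comparison_test)
  show "summable (\<lambda>s. fact k * exp (\<bar>c\<bar> + m) * (poisson_w m s * exp 1 ^ s))"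
    by (intro summable_mult pw_geom_summable)
  show "\<exists>N. \<forall>n\<ge>N. norm (poisson_w m n * (real n + c - m) ^ k) \<le> fact k * exp (\<bar>c\<bar> + m) * (poisson_w m n * exp 1 ^ n)"
  proof (intro exI allI impI)
    fix n :: nat
    have "\<bar>real n + c - m\<bar> ^ k \<le> (real n + \<bar>c\<bar> + m) ^ k"
      by (rule power_mono) (use m in auto)
    also have "\<dots> \<le> fact k * exp (real n + \<bar>c\<bar> + m)"
      by (rule pow_le_exp) (use m in auto)
    also have "exp (real n + \<bar>c\<bar> + m) = exp (\<bar>c\<bar> + m) * exp 1 ^ n"
      by (simp add: exp_add exp_of_nat_mult[symmetric])
    finally have "\<bar>real n + c - m\<bar> ^ k \<le> fact k * (exp (\<bar>c\<bar> + m) * exp 1 ^ n)" .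
    then have "poisson_w m n * \<bar>real n + c - m\<bar> ^ k \<le> poisson_w m n * (fact k * (exp (\<bar>c\<bar> + m) * exp 1 ^ n))"
      by (rule mult_left_mono) (use m pw_nonneg in auto)
    then show "norm (poisson_w m n * (real n + c - m) ^ k) \<le> fact k * exp (\<bar>c\<bar> + m) * (poisson_w m n * exp 1 ^ n)"
      using pw_nonneg[OF m, of n] by (simp add: abs_mult power_abs mult_ac)
  qed
qed

lemma mom_summable0: "m \<ge> 0 \<Longrightarrow> summable (\<lambda>s. poisson_w m s * (real s - m) ^ k)"
  using mom_summable[of m 0 k] by simp

lemma mu0: "mu_central 0 m = 1"
  using pw_sums[of m] by (simp add: mu_central_def sums_iff)


lemma shift_sum:
  assumes m: "m \<ge> 0" and s: "summable (\<lambda>s. poisson_w m s * h (Suc s))"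
  shows "summable (\<lambda>s. poisson_w m s * real s * h s)"
    "(\<Sum>s. poisson_w m s * real s * h s) = m * (\<Sum>s. poisson_w m s * h (Suc s))"
proof -
  define F where "F s = poisson_w m s * real s * h s" for s
  have FS: "F (Suc s) = m * (poisson_w m s * h (Suc s))" for s
    unfolding F_def pw_Suc by (simp add: field_simps)
  have "summable (\<lambda>s. F (Suc s))" unfolding FS by (intro summable_mult s)
  then have sF: "summable F" by (simp add: summable_Suc_iff)
  then show "summable (\<lambda>s. poisson_w m s * real s * h s)" by (simp add: F_def[abs_def])
  have "(\<Sum>s. F (Suc s)) = suminf F - F 0" by (rule suminf_split_head[OF sF])
  moreover have "F 0 = 0" by (simp add: F_def)
  moreover have "(\<Sum>s. F (Suc s)) = m * (\<Sum>s. poisson_w m s * h (Suc s))"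
    unfolding FS by (rule suminf_mult[OF s])
  ultimately have "suminf F = m * (\<Sum>s. poisson_w m s * h (Suc s))" by simp
  then show "(\<Sum>s. poisson_w m s * real s * h s) = m * (\<Sum>s. poisson_w m s * h (Suc s))"
    by (simp add: F_def[abs_def])
qed

lemma mu_rec:
  assumes m: "m \<ge> 0"
  shows "mu_central (Suc k) m = m * (\<Sum>i\<le>k. real (k choose i) * mu_central i m) - m * mu_central k m"
proof -
  define h where "h s = (real s - m) ^ k" for s
  have s1: "summable (\<lambda>s. poisson_w m s * h (Suc s))"
    using mom_summable[OF m, of 1 k] by (simp add: h_def add_ac)
  note sh = shift_sum[OF m s1]
  have s0: "summable (\<lambda>s. poisson_w m s * h s)" using mom_summable0[OF m] by (simp add: h_def)
  have eq: "poisson_w m s * (real s - m) ^ Suc k = poisson_w m s * real s * h s - m * (poisson_w m s * h s)" for s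
    by (simp add: h_def algebra_simps)
  have "mu_central (Suc k) m = (\<Sum>s. poisson_w m s * real s * h s) - m * (\<Sum>s. poisson_w m s * h s)"
    unfolding mu_central_def eq
    using suminf_diff[OF sh(1) summable_mult[OF s0, of m]] suminf_mult[OF s0, of m] by simp
  also have "(\<Sum>s. poisson_w m s * h s) = mu_central k m" by (simp add: mu_central_def h_def)
  also have "(\<Sum>s. poisson_w m s * real s * h s) = m * (\<Sum>i\<le>k. real (k choose i) * mu_central i m)"
    unfolding sh(2)
  proof -
    have hb: "poisson_w m s * h (Suc s) = (\<Sum>i\<le>k. real (k choose i) * (poisson_w m s * (real s - m) ^ i))" for s
    proof -
      have "h (Suc s) = ((real s - m) + 1) ^ k" by (simp add: h_def algebra_simps)
      also have "\<dots> = (\<Sum>i\<le>k. real (k choose i) * (real s - m) ^ i)"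
        by (subst binomial_ring) simp
      finally show ?thesis by (simp add: sum_distrib_left mult_ac)
    qed
    have "(\<Sum>s. poisson_w m s * h (Suc s)) = (\<Sum>i\<le>k. \<Sum>s. real (k choose i) * (poisson_w m s * (real s - m) ^ i))"
      unfolding hb by (rule suminf_sum) (intro summable_mult mom_summable0[OF m])
    also have "\<dots> = (\<Sum>i\<le>k. real (k choose i) * mu_central i m)"
      by (intro sum.cong refl) (simp add: mu_central_def suminf_mult[OF mom_summable0[OF m]])
    finally show "m * (\<Sum>s. poisson_w m s * h (Suc s)) = m * (\<Sum>i\<le>k. real (k choose i) * mu_central i m)" by simp
  qed
  finally show ?thesis .
qed


lemma mu_rec':
  assumes m: "m \<ge> 0"
  shows "mu_central (Suc k) m = m * (\<Sum>i<k. real (k choose i) * mu_central i m)"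
  using mu_rec[OF m, of k] by (simp add: lessThan_Suc_atMost[symmetric] algebra_simps)

lemma mu_bound: "\<exists>C. \<forall>m\<ge>1. \<bar>mu_central k m\<bar> \<le> C * m ^ (k div 2)"
proof (induction k rule: less_induct)
  case (less k)
  show ?case
  proof (cases k)
    case 0 then show ?thesis by (intro exI[of _ 1]) (simp add: mu0)
  next
    case (Suc j)
    show ?thesis
    proof (cases j)
      case 0
      then show ?thesis using Suc by (intro exI[of _ 0]) (simp add: mu_rec')
    next
      case (Suc j')
      from less[unfolded \<open>k = Suc j\<close>] have "\<forall>i<j. \<exists>C. \<forall>m\<ge>1. \<bar>mu_central i m\<bar> \<le> C * m ^ (i div 2)"
        by auto
      then obtain Cf where Cf: "\<And>i m. i < j \<Longrightarrow> m \<ge> 1 \<Longrightarrow> \<bar>mu_central i m\<bar> \<le> Cf i * m ^ (i div 2)"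
        by metis
      define C where "C = (\<Sum>i<j. real (j choose i) * \<bar>Cf i\<bar>)"
      show ?thesis
      proof (intro exI[of _ C] allI impI)
        fix m :: real assume m: "m \<ge> 1"
        have "\<bar>mu_central k m\<bar> = m * \<bar>\<Sum>i<j. real (j choose i) * mu_central i m\<bar>"
          using m by (simp add: \<open>k = Suc j\<close> mu_rec' abs_mult)
        also have "\<bar>\<Sum>i<j. real (j choose i) * mu_central i m\<bar> \<le> (\<Sum>i<j. real (j choose i) * \<bar>mu_central i m\<bar>)"
          by (rule order.trans[OF sum_abs]) (simp add: abs_mult)
        also have "\<dots> \<le> (\<Sum>i<j. real (j choose i) * (\<bar>Cf i\<bar> * m ^ (j' div 2)))"
        proof (intro sum_mono mult_left_mono)
          fix i assume i: "i \<in> {..<j}"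
          have "\<bar>mu_central i m\<bar> \<le> Cf i * m ^ (i div 2)" using Cf[of i m] i m by auto
          also have "\<dots> \<le> \<bar>Cf i\<bar> * m ^ (i div 2)" by (intro mult_right_mono) (use m in auto)
          also have "\<dots> \<le> \<bar>Cf i\<bar> * m ^ (j' div 2)"
            by (intro mult_left_mono power_increasing) (use m i \<open>j = Suc j'\<close> in auto)
          finally show "\<bar>mu_central i m\<bar> \<le> \<bar>Cf i\<bar> * m ^ (j' div 2)" .
        qed auto
        also have "\<dots> = C * m ^ (j' div 2)" unfolding C_def sum_distrib_right by (intro sum.cong) (simp_all add: mult_ac)
        finally have "\<bar>mu_central k m\<bar> \<le> m * (C * m ^ (j' div 2))"
          using m by (simp add: mult_left_mono)
        also have "\<dots> = C * m ^ (k div 2)"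
          using \<open>k = Suc j\<close> \<open>j = Suc j'\<close> by simp
        finally show "\<bar>mu_central k m\<bar> \<le> C * m ^ (k div 2)" .
      qed
    qed
  qed
qed


definition cf :: "real \<Rightarrow> nat \<Rightarrow> real" where
  "cf a k = (-1) ^ k * pochhammer a k / fact k"

definition Rn :: "real \<Rightarrow> nat \<Rightarrow> real \<Rightarrow> real" where
  "Rn a n u = (1 + u) powr (- a) - (\<Sum>k<n. cf a k * u ^ k)"

lemma deriv_pw:
  assumes "t > -1"
  shows "((\<lambda>t. (1 + t) powr e) has_real_derivative e * (1 + t) powr (e - 1)) (at t)"
  using assms by (auto intro!: derivative_eq_intros)

lemma taylor_bound:
  assumes a: "a > 0" and n: "n > 0"
  shows "\<exists>C. \<forall>u\<ge>-1/2. \<bar>Rn a n u\<bar> \<le> C * \<bar>u\<bar> ^ n"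
proof -
  define diff where "diff k t = (-1) ^ k * pochhammer a k * (1 + t) powr (- a - real k)" for k t
  define C where "C = pochhammer a n * 2 powr (a + n) / fact n"
  have pos: "pochhammer a k > 0" for k using a by (intro pochhammer_pos) auto
  show ?thesis
  proof (intro exI[of _ C] allI impI)
    fix u :: real assume u: "u \<ge> -1/2"
    show "\<bar>Rn a n u\<bar> \<le> C * \<bar>u\<bar> ^ n"
    proof (cases "u = 0")
      case True
      have "(\<Sum>k<n. cf a k * u ^ k) = (\<Sum>k<n. if k = 0 then 1 else 0)"
        by (intro sum.cong) (auto simp: True cf_def)
      also have "\<dots> = 1" using n by simp
      finally show ?thesis using True n by (simp add: Rn_def cf_def power_0_left)
    next
      case False
      have D: "\<forall>m t. m < n \<and> -1/2 \<le> t \<and> t \<le> max u 0 \<longrightarrow> DERIV (diff m) t :> diff (Suc m) t"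
      proof (intro allI impI)
        fix m t assume mt: "m < n \<and> -1/2 \<le> t \<and> t \<le> max u 0"
        have "((\<lambda>t. (-1) ^ m * pochhammer a m * (1 + t) powr (- a - real m)) has_real_derivative
               (-1) ^ m * pochhammer a m * ((- a - real m) * (1 + t) powr (- a - real m - 1))) (at t)"
          by (intro DERIV_cmult deriv_pw) (use mt in auto)
        moreover have "(-1) ^ m * pochhammer a m * ((- a - real m) * (1 + t) powr (- a - real m - 1)) = diff (Suc m) t"
          by (simp add: diff_def pochhammer_rec' algebra_simps)
        ultimately show "DERIV (diff m) t :> diff (Suc m) t" unfolding diff_def[abs_def] by simp
      qed
      have "\<exists>t. (if u < 0 then u < t \<and> t < 0 else 0 < t \<and> t < u) \<and>
            (1 + u) powr (-a) = (\<Sum>m<n. (diff m 0 / fact m) * (u - 0)^m) + (diff n t / fact n) * (u - 0)^n"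
        by (rule Taylor[OF n _ D]) (use u False in \<open>auto simp: diff_def\<close>)
      then obtain t where tt: "(if u < 0 then u < t \<and> t < 0 else 0 < t \<and> t < u)"
        and eq: "(1 + u) powr (-a) = (\<Sum>m<n. (diff m 0 / fact m) * u^m) + (diff n t / fact n) * u^n"
        by auto
      have t: "t \<ge> -1/2" using u tt by (auto split: if_splits)
      have "(\<Sum>m<n. (diff m 0 / fact m) * u^m) = (\<Sum>k<n. cf a k * u ^ k)"
        by (simp add: diff_def cf_def)
      then have R: "Rn a n u = (diff n t / fact n) * u^n" using eq by (simp add: Rn_def)
      have "\<bar>diff n t\<bar> = pochhammer a n * (1 + t) powr (- a - real n)"
        using pos[of n] by (simp add: diff_def abs_mult)
      also have "(1 + t) powr (- a - real n) \<le> (1/2) powr (- a - real n)"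
        by (rule powr_mono2') (use t a in auto)
      also have "(1/2::real) powr (- a - real n) = 2 powr (a + n)"
        proof -
        have "(1/2::real) powr (- a - real n) = 1 / 2 powr (- (a + real n))"
          by (simp add: powr_divide)
        also have "\<dots> = 2 powr (a + n)" by (simp only: powr_minus divide_inverse inverse_inverse_eq mult_1_left)
        finally show ?thesis .
      qed
      finally have "\<bar>diff n t\<bar> \<le> pochhammer a n * 2 powr (a + n)"
        using pos[of n] by simp
      then show ?thesis unfolding R C_def
        by (simp add: abs_mult power_abs divide_right_mono mult_right_mono)
    qed
  qed
qed


lemma global_bound:
  assumes a: "a > 0" and n: "n > 0"
  shows "\<exists>C D. C \<ge> 0 \<and> D \<ge> 0 \<and> (\<forall>M u. M \<ge> 1 \<longrightarrow> 1 + u \<ge> 1 / M \<longrightarrow>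
           \<bar>Rn a n u\<bar> \<le> C * \<bar>u\<bar> ^ n + D * M powr a * u ^ (2 * K))"
proof -
  obtain C where C: "\<And>u. u \<ge> -1/2 \<Longrightarrow> \<bar>Rn a n u\<bar> \<le> C * \<bar>u\<bar> ^ n"
    using taylor_bound[OF a n] by blast
  define S where "S = (\<Sum>k<n. \<bar>cf a k\<bar>)"
  have S0: "S \<ge> 0" by (simp add: S_def sum_nonneg)
  define D where "D = (1 + S) * 4 ^ K"
  have D0: "D \<ge> 0" using S0 unfolding D_def by simp
  have "\<forall>M u. M \<ge> 1 \<longrightarrow> 1 + u \<ge> 1 / M \<longrightarrow>
           \<bar>Rn a n u\<bar> \<le> \<bar>C\<bar> * \<bar>u\<bar> ^ n + D * M powr a * u ^ (2 * K)"
  proof (intro allI impI)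
    fix M u :: real assume M: "M \<ge> 1" and u: "1 + u \<ge> 1 / M"
    have Ma: "M powr a \<ge> 1" using M a by (simp add: ge_one_powr_ge_zero)
    have Dt: "D * M powr a * u ^ (2 * K) \<ge> 0"
      using S0 Ma by (simp add: D_def power_mult zero_le_power2 power_even_eq)
    show "\<bar>Rn a n u\<bar> \<le> \<bar>C\<bar> * \<bar>u\<bar> ^ n + D * M powr a * u ^ (2 * K)"
    proof (cases "u \<ge> -1/2")
      case True
      have "\<bar>Rn a n u\<bar> \<le> C * \<bar>u\<bar> ^ n" by (rule C[OF True])
      also have "\<dots> \<le> \<bar>C\<bar> * \<bar>u\<bar> ^ n" by (intro mult_right_mono) auto
      finally show ?thesis using Dt by linarith
    next
      case False
      have iM: "1 / M > 0" using M by simp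
      have p1: "1 + u > 0" using u iM by linarith
      have u1: "\<bar>u\<bar> \<le> 1" using p1 False by (simp add: abs_if)
      have "(1 + u) powr (- a) \<le> (1 / M) powr (- a)"
        by (rule powr_mono2') (use a u M in auto)
      also have "(1 / M) powr (- a) = M powr a"
      proof -
        have "(1 / M) powr (- a) = 1 / M powr (- a)" using M by (simp add: powr_divide)
        also have "\<dots> = M powr a" by (simp only: powr_minus divide_inverse inverse_inverse_eq mult_1_left)
        finally show ?thesis .
      qed
      finally have f: "(1 + u) powr (- a) \<le> M powr a" .
      have "\<bar>\<Sum>k<n. cf a k * u ^ k\<bar> \<le> (\<Sum>k<n. \<bar>cf a k\<bar> * \<bar>u\<bar> ^ k)"
        by (rule order.trans[OF sum_abs]) (simp add: abs_mult power_abs)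
      also have "\<dots> \<le> S" unfolding S_def
        by (intro sum_mono mult_left_le) (use u1 in \<open>auto intro: power_le_one\<close>)
      finally have ps: "\<bar>\<Sum>k<n. cf a k * u ^ k\<bar> \<le> S" .
      have "\<bar>Rn a n u\<bar> \<le> M powr a + S"
      proof -
        have "\<bar>(1 + u) powr (- a) - (\<Sum>k<n. cf a k * u ^ k)\<bar> \<le> \<bar>(1 + u) powr (- a)\<bar> + \<bar>\<Sum>k<n. cf a k * u ^ k\<bar>"
          by (rule abs_triangle_ineq4)
        moreover have "\<bar>(1 + u) powr (- a)\<bar> = (1 + u) powr (- a)" by simp
        ultimately show ?thesis unfolding Rn_def using f ps by linarith
      qed
      also have "\<dots> \<le> (1 + S) * M powr a"
      proof -
        have "S * 1 \<le> S * M powr a" by (rule mult_left_mono) (use Ma S0 in auto)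
        then show ?thesis by (simp add: algebra_simps)
      qed
      also have "\<dots> \<le> (1 + S) * M powr a * (4 ^ K * u ^ (2 * K))"
      proof -
        have "(1/2) * (1/2) \<le> (-u) * (-u)" using False by (intro mult_mono) auto
        then have "1 \<le> 4 * u^2" by (simp add: power2_eq_square)
        then have "1 \<le> (4 * u^2) ^ K" by (rule one_le_power)
        then have "1 \<le> 4 ^ K * u ^ (2 * K)" by (simp add: power_mult power_mult_distrib)
        moreover have "(1 + S) * M powr a \<ge> 0" using Ma S0 by simp
        ultimately have "(1 + S) * M powr a * 1 \<le> (1 + S) * M powr a * (4 ^ K * u ^ (2 * K))"
          by (intro mult_left_mono)
        then show ?thesis by simp
      qed
      also have "\<dots> = D * M powr a * u ^ (2 * K)" by (simp add: D_def mult_ac)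
      finally have "\<bar>Rn a n u\<bar> \<le> D * M powr a * u ^ (2 * K)" .
      moreover have "\<bar>C\<bar> * \<bar>u\<bar> ^ n \<ge> 0" by simp
      ultimately show ?thesis by linarith
    qed
  qed
  then show ?thesis using D0 by (intro exI[of _ "\<bar>C\<bar>"] exI[of _ D]) simp
qed


definition U :: "real \<Rightarrow> nat \<Rightarrow> real" where
  "U m s = (real s - m) / (m + 1)"

lemma pw_inv_summable:
  assumes m: "m \<ge> 0" and a: "a > 0"
  shows "summable (\<lambda>s. poisson_w m s * real (Suc s) powr (- a))"
proof (rule summable_comparison_test)
  show "summable (poisson_w m)" using pw_sums[of m] by (simp add: sums_iff)
  show "\<exists>N. \<forall>n\<ge>N. norm (poisson_w m n * real (Suc n) powr (- a)) \<le> poisson_w m n"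
  proof (intro exI allI impI)
    fix n :: nat
    have "real (Suc n) powr (- a) \<le> 1 powr (- a)" using a by (intro powr_mono2') auto
    then have "real (Suc n) powr (- a) \<le> 1" by simp
    then show "norm (poisson_w m n * real (Suc n) powr (- a)) \<le> poisson_w m n"
      using pw_nonneg[OF m, of n] by (simp add: abs_mult mult_left_le)
  qed
qed

lemma one_plus_U: "m \<ge> 0 \<Longrightarrow> (1 + U m s) powr (- a) = real (Suc s) powr (- a) * (m + 1) powr a"
proof -
  assume m: "m \<ge> 0"
  have "1 + U m s = real (Suc s) / (m + 1)" using m by (simp add: U_def field_simps)
  then have "(1 + U m s) powr (- a) = real (Suc s) powr (- a) / (m + 1) powr (- a)"
    using m by (simp add: powr_divide)
  also have "\<dots> = real (Suc s) powr (- a) * (m + 1) powr a"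
    by (simp add: powr_minus divide_inverse)
  finally show ?thesis .
qed

lemma G_repr:
  assumes m: "m > 0" and r: "r > 0"
  shows "g_inv r m * (m + 1) powr (r + 1) / m = (\<Sum>s. poisson_w m s * (1 + U m s) powr (- (r + 1)))"
    "summable (\<lambda>s. poisson_w m s * (1 + U m s) powr (- (r + 1)))"
proof -
  define a where "a = r + 1"
  have a: "a > 0" using r by (simp add: a_def)
  define X where "X = (\<Sum>s. poisson_w m s * real (Suc s) powr (- a))"
  have sX: "summable (\<lambda>s. poisson_w m s * real (Suc s) powr (- a))"
    using pw_inv_summable[of m a] m a by simp
  have teq: "poisson_w m (Suc s) * real (Suc s) powr (- r) = m * (poisson_w m s * real (Suc s) powr (- a))" for s
  proof -
    have "real (Suc s) powr (- a) = real (Suc s) powr (- r) * real (Suc s) powr (-1)"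
      unfolding a_def by (subst powr_add[symmetric]) simp
    also have "\<dots> = real (Suc s) powr (- r) / real (Suc s)"
      by (simp add: powr_neg_one)
    finally show ?thesis by (simp add: pw_Suc)
  qed
  have g: "g_inv r m = m * X"
    unfolding g_inv_def teq X_def by (rule suminf_mult[OF sX])
  have e: "poisson_w m s * (1 + U m s) powr (- a) = poisson_w m s * real (Suc s) powr (- a) * (m + 1) powr a" for s
    using m by (simp add: one_plus_U)
  show "summable (\<lambda>s. poisson_w m s * (1 + U m s) powr (- (r + 1)))"
    unfolding a_def[symmetric] e by (intro summable_mult2 sX)
  have "(\<Sum>s. poisson_w m s * (1 + U m s) powr (- a)) = X * (m + 1) powr a"
    unfolding e X_def by (rule suminf_mult2[OF sX, symmetric])
  then show "g_inv r m * (m + 1) powr (r + 1) / m = (\<Sum>s. poisson_w m s * (1 + U m s) powr (- (r + 1)))"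
    using m unfolding g a_def[symmetric] by simp
qed

lemma P_repr:
  assumes m: "m \<ge> 0"
  shows "(\<Sum>k<n. (-1) ^ k * mu_central k m / (m + 1) ^ k * binom_r r k) =
           (\<Sum>s. poisson_w m s * (\<Sum>k<n. cf (r + 1) k * U m s ^ k))"
    "summable (\<lambda>s. poisson_w m s * (\<Sum>k<n. cf (r + 1) k * U m s ^ k))"
proof -
  define c where "c k = (-1) ^ k / (m + 1) ^ k * binom_r r k" for k
  have e: "poisson_w m s * (\<Sum>k<n. cf (r + 1) k * U m s ^ k) =
           (\<Sum>k<n. poisson_w m s * (real s - m) ^ k * c k)" for s
    unfolding sum_distrib_left
    by (intro sum.cong refl) (simp add: c_def cf_def binom_r_def U_def power_divide mult_ac)
  have sk: "summable (\<lambda>s. poisson_w m s * (real s - m) ^ k * c k)" for k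
    by (intro summable_mult2 mom_summable0 m)
  show "summable (\<lambda>s. poisson_w m s * (\<Sum>k<n. cf (r + 1) k * U m s ^ k))"
    unfolding e by (intro summable_sum sk)
  have "(\<Sum>s. poisson_w m s * (\<Sum>k<n. cf (r + 1) k * U m s ^ k)) =
        (\<Sum>k<n. \<Sum>s. poisson_w m s * (real s - m) ^ k * c k)"
    unfolding e by (rule suminf_sum) (rule sk)
  also have "\<dots> = (\<Sum>k<n. mu_central k m * c k)"
    by (intro sum.cong refl) (simp add: mu_central_def suminf_mult2[OF mom_summable0[OF m]])
  also have "\<dots> = (\<Sum>k<n. (-1) ^ k * mu_central k m / (m + 1) ^ k * binom_r r k)"
    by (simp add: c_def mult_ac)
  finally show "(\<Sum>k<n. (-1) ^ k * mu_central k m / (m + 1) ^ k * binom_r r k) =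
           (\<Sum>s. poisson_w m s * (\<Sum>k<n. cf (r + 1) k * U m s ^ k))" by simp
qed

lemma diff_repr:
  assumes m: "m > 0" and r: "r > 0"
  shows "g_inv r m * (m + 1) powr (r + 1) / m - (\<Sum>k<n. (-1) ^ k * mu_central k m / (m + 1) ^ k * binom_r r k)
          = (\<Sum>s. poisson_w m s * Rn (r + 1) n (U m s))"
    "summable (\<lambda>s. poisson_w m s * Rn (r + 1) n (U m s))"
proof -
  have e: "poisson_w m s * Rn (r + 1) n (U m s) = poisson_w m s * (1 + U m s) powr (- (r + 1)) -
            poisson_w m s * (\<Sum>k<n. cf (r + 1) k * U m s ^ k)" for s
    by (simp add: Rn_def algebra_simps)
  note G = G_repr[OF m r] and P = P_repr[where m=m and n=n and r=r]
  show "summable (\<lambda>s. poisson_w m s * Rn (r + 1) n (U m s))"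
    unfolding e using G(2) P(2) m by (intro summable_diff) auto
  show "g_inv r m * (m + 1) powr (r + 1) / m - (\<Sum>k<n. (-1) ^ k * mu_central k m / (m + 1) ^ k * binom_r r k)
          = (\<Sum>s. poisson_w m s * Rn (r + 1) n (U m s))"
  proof -
    have m0: "m \<ge> 0" using m by simp
    show ?thesis unfolding e G(1) P(1)[OF m0]
      using suminf_diff[OF G(2) P(2)[OF m0]] by simp
  qed
qed


lemma aux1:
  assumes m: "(m::real) \<ge> 1"
  shows "m ^ J / (m + 1) ^ (2 * J) \<le> 1 / m ^ J"
proof -
  have "m ^ J * m ^ J \<le> (m + 1) ^ (2 * J)"
  proof -
    have "m ^ J * m ^ J = m ^ (2 * J)" by (simp add: power_add[symmetric] mult_2)
    also have "\<dots> \<le> (m + 1) ^ (2 * J)" by (rule power_mono) (use m in auto)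
    finally show ?thesis .
  qed
  moreover have "m ^ J > 0" "(m + 1) ^ (2 * J) > 0" using m by auto
  ultimately show ?thesis by (simp add: field_simps)
qed

lemma aux2:
  assumes m: "(m::real) \<ge> 1" and a: "a > 0" and K: "K = J + nat \<lceil>a\<rceil>"
  shows "(m + 1) powr a * m ^ K / (m + 1) ^ (2 * K) \<le> 1 / m ^ J"
proof -
  define M where "M = m + 1"
  have M: "M \<ge> 1" using m by (simp add: M_def)
  have "M powr a \<le> M powr (real (nat \<lceil>a\<rceil>))"
    by (rule powr_mono) (use M a in auto)
  also have "\<dots> = M ^ nat \<lceil>a\<rceil>" using M by (simp add: powr_realpow)
  finally have Ma: "M powr a \<le> M ^ nat \<lceil>a\<rceil>" .
  have "M powr a * m ^ K * m ^ J \<le> M ^ nat \<lceil>a\<rceil> * M ^ K * M ^ J"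
    by (intro mult_mono Ma power_mono) (use m M in \<open>auto simp: M_def\<close>)
  also have "\<dots> = M ^ (2 * K)" unfolding power_add[symmetric] by (rule arg_cong[where f="power M"]) (simp add: K)
  finally have "M powr a * m ^ K * m ^ J \<le> M ^ (2 * K)" .
  moreover have "m ^ J > 0" "M ^ (2 * K) > 0" using m M by auto
  ultimately show ?thesis unfolding M_def[symmetric] by (simp add: field_simps)
qed

lemma abs_suminf_le:
  fixes f g :: "nat \<Rightarrow> real"
  assumes "summable f" "summable g" "\<And>s. \<bar>f s\<bar> \<le> g s"
  shows "\<bar>suminf f\<bar> \<le> suminf g"
proof -
  have "suminf f \<le> suminf g" by (rule suminf_le) (use assms in \<open>auto simp: abs_le_iff\<close>)
  moreover have "suminf (\<lambda>s. - g s) \<le> suminf f"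
  proof (rule suminf_le)
    show "- g n \<le> f n" for n using assms(3)[of n] by (simp add: abs_le_iff)
  qed (use assms in \<open>auto simp: summable_minus\<close>)
  moreover have "suminf (\<lambda>s. - g s) = - suminf g" by (rule suminf_minus[OF assms(2)])
  ultimately show ?thesis by linarith
qed

lemma main_even:
  assumes r: "r > 0" and J: "J \<ge> 1"
  shows "\<exists>C. \<forall>m\<ge>1. \<bar>g_inv r m * (m + 1) powr (r + 1) / m
            - (\<Sum>k<2*J. (-1) ^ k * mu_central k m / (m + 1) ^ k * binom_r r k)\<bar> \<le> C / m ^ J"
proof -
  define a where "a = r + 1"
  have a: "a > 0" using r by (simp add: a_def)
  define K where "K = J + nat \<lceil>a\<rceil>"
  obtain C0 D0 where C0: "C0 \<ge> 0" and D0: "D0 \<ge> 0" and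
    gb: "\<And>M u. M \<ge> 1 \<Longrightarrow> 1 + u \<ge> 1 / M \<Longrightarrow>
           \<bar>Rn a (2*J) u\<bar> \<le> C0 * \<bar>u\<bar> ^ (2*J) + D0 * M powr a * u ^ (2 * K)"
    using global_bound[OF a, of "2*J" K] J by auto
  obtain A where A: "\<And>m. m \<ge> 1 \<Longrightarrow> \<bar>mu_central (2*J) m\<bar> \<le> A * m ^ J"
    using mu_bound[of "2*J"] by auto
  obtain B where B: "\<And>m. m \<ge> 1 \<Longrightarrow> \<bar>mu_central (2*K) m\<bar> \<le> B * m ^ K"
    using mu_bound[of "2*K"] by auto
  show ?thesis
  proof (intro exI[of _ "C0 * \<bar>A\<bar> + D0 * \<bar>B\<bar>"] allI impI)
    fix m :: real assume m: "m \<ge> 1"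
    define M where "M = m + 1"
    have M: "M \<ge> 1" using m by (simp add: M_def)
    have m0: "m \<ge> 0" using m by simp
    define g where "g s = C0 / M ^ (2*J) * (poisson_w m s * (real s - m) ^ (2*J)) +
        D0 * M powr a / M ^ (2*K) * (poisson_w m s * (real s - m) ^ (2*K))" for s
    have sg: "summable g" unfolding g_def
      by (intro summable_add summable_mult mom_summable0 m0)
    have sumg: "suminf g = C0 / M ^ (2*J) * mu_central (2*J) m + D0 * M powr a / M ^ (2*K) * mu_central (2*K) m"
    proof -
      have s1: "summable (\<lambda>s. poisson_w m s * (real s - m) ^ (2*J))" by (rule mom_summable0[OF m0])
      have s2: "summable (\<lambda>s. poisson_w m s * (real s - m) ^ (2*K))" by (rule mom_summable0[OF m0])
      have "suminf g = (\<Sum>s. C0 / M ^ (2*J) * (poisson_w m s * (real s - m) ^ (2*J))) +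
          (\<Sum>s. D0 * M powr a / M ^ (2*K) * (poisson_w m s * (real s - m) ^ (2*K)))"
        unfolding g_def by (rule suminf_add[symmetric]) (intro summable_mult s1 s2)+
      also have "\<dots> = C0 / M ^ (2*J) * mu_central (2*J) m + D0 * M powr a / M ^ (2*K) * mu_central (2*K) m"
        unfolding mu_central_def suminf_mult[OF s1] suminf_mult[OF s2] ..
      finally show ?thesis .
    qed
    have pt: "\<bar>poisson_w m s * Rn a (2*J) (U m s)\<bar> \<le> g s" for s
    proof -
      have "1 + U m s \<ge> 1 / M" using m by (simp add: U_def M_def field_simps)
      then have "\<bar>Rn a (2*J) (U m s)\<bar> \<le> C0 * \<bar>U m s\<bar> ^ (2*J) + D0 * M powr a * U m s ^ (2 * K)"
        by (rule gb[OF M])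
      then have "poisson_w m s * \<bar>Rn a (2*J) (U m s)\<bar> \<le> poisson_w m s * (C0 * \<bar>U m s\<bar> ^ (2*J) + D0 * M powr a * U m s ^ (2 * K))"
        by (rule mult_left_mono) (rule pw_nonneg[OF m0])
      also have "\<dots> = g s"
      proof -
        have ev: "\<bar>U m s\<bar> ^ (2*J) = U m s ^ (2*J)" by (rule power_even_abs) simp
        show ?thesis unfolding ev by (simp add: g_def U_def M_def power_divide algebra_simps)
      qed
      finally show ?thesis using pw_nonneg[OF m0, of s] by (simp add: abs_mult)
    qed
    have dr: "g_inv r m * (m + 1) powr (r + 1) / m - (\<Sum>k<2*J. (-1) ^ k * mu_central k m / (m + 1) ^ k * binom_r r k)
          = (\<Sum>s. poisson_w m s * Rn a (2*J) (U m s))"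
         "summable (\<lambda>s. poisson_w m s * Rn a (2*J) (U m s))"
      using diff_repr[of m r "2*J"] m r by (auto simp: a_def)
    have "\<bar>g_inv r m * (m + 1) powr (r + 1) / m - (\<Sum>k<2*J. (-1) ^ k * mu_central k m / (m + 1) ^ k * binom_r r k)\<bar>
          \<le> suminf g" unfolding dr(1) by (rule abs_suminf_le[OF dr(2) sg pt])
    also have "\<dots> \<le> C0 / M ^ (2*J) * (\<bar>A\<bar> * m ^ J) + D0 * M powr a / M ^ (2*K) * (\<bar>B\<bar> * m ^ K)"
      unfolding sumg
    proof (intro add_mono mult_left_mono)
      show "mu_central (2*J) m \<le> \<bar>A\<bar> * m ^ J" using A[OF m] m
        by (smt (verit) mult_right_mono zero_le_power)
      show "mu_central (2*K) m \<le> \<bar>B\<bar> * m ^ K" using B[OF m] m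
        by (smt (verit) mult_right_mono zero_le_power)
    qed (use C0 D0 M in auto)
    also have "\<dots> = C0 * \<bar>A\<bar> * (m ^ J / M ^ (2*J)) + D0 * \<bar>B\<bar> * (M powr a * m ^ K / M ^ (2*K))"
      by (simp add: field_simps)
    also have "\<dots> \<le> C0 * \<bar>A\<bar> * (1 / m ^ J) + D0 * \<bar>B\<bar> * (1 / m ^ J)"
      unfolding M_def
      by (intro add_mono mult_left_mono aux1 aux2[OF m a] m) (use C0 D0 in \<open>auto simp: K_def\<close>)
    also have "\<dots> = (C0 * \<bar>A\<bar> + D0 * \<bar>B\<bar>) / m ^ J" by (simp add: add_divide_distrib)
    finally show "\<bar>g_inv r m * (m + 1) powr (r + 1) / m - (\<Sum>k<2*J. (-1) ^ k * mu_central k m / (m + 1) ^ k * binom_r r k)\<bar>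
          \<le> (C0 * \<bar>A\<bar> + D0 * \<bar>B\<bar>) / m ^ J" .
  qed
qed


lemma aux3:
  assumes m: "(m::real) \<ge> 1" and pJ: "p + J = N"
  shows "m ^ p / (m + 1) ^ N \<le> 1 / m ^ J"
proof -
  have "m ^ p * m ^ J \<le> (m + 1) ^ N"
  proof -
    have "m ^ p * m ^ J = m ^ N" by (simp add: power_add[symmetric] pJ)
    also have "\<dots> \<le> (m + 1) ^ N" by (rule power_mono) (use m in auto)
    finally show ?thesis .
  qed
  moreover have "m ^ J > 0" "(m + 1) ^ N > 0" using m by auto
  ultimately show ?thesis by (simp add: field_simps)
qed

lemma ceil_half: "real_of_int \<lceil>real N / 2\<rceil> = real ((N + 1) div 2)"
proof (cases "even N")
  case True
  then obtain q where "N = 2 * q" by blast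
  then show ?thesis by simp
next
  case False
  then obtain q where q: "N = 2 * q + 1" using oddE by blast
  have "\<lceil>real N / 2\<rceil> = int q + 1"
    by (rule ceiling_unique) (auto simp: q)
  then show ?thesis by (simp add: q)
qed

theorem theorem2:
  fixes r :: real and N :: nat
  assumes "r > 0" and "N \<ge> 1"
  shows "(\<lambda>m. g_inv r m * (m + 1) powr (r + 1) / m
            - (\<Sum>k<N. (-1) ^ k * mu_central k m / (m + 1) ^ k * binom_r r k))
         \<in> O[at_top](\<lambda>m. m powr (- real_of_int \<lceil>real N / 2\<rceil>))"
proof -
  define J where "J = (N + 1) div 2"
  have J1: "J \<ge> 1" using assms(2) by (simp add: J_def)
  define Df where "Df n m = g_inv r m * (m + 1) powr (r + 1) / m
            - (\<Sum>k<n. (-1) ^ k * mu_central k m / (m + 1) ^ k * binom_r r k)" for n m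
  obtain C1 where C1: "\<And>m. m \<ge> 1 \<Longrightarrow> \<bar>Df (2*J) m\<bar> \<le> C1 / m ^ J"
    using main_even[OF assms(1) J1] unfolding Df_def by auto
  have "\<exists>C. \<forall>m\<ge>1. \<bar>Df N m\<bar> \<le> C / m ^ J"
  proof (cases "even N")
    case True
    then have "2 * J = N" by (auto simp: J_def)
    then show ?thesis using C1 by auto
  next
    case False
    then have NJ: "2 * J = Suc N" by (auto simp: J_def elim!: oddE)
    have pJ: "N div 2 + J = N" using False by (auto simp: J_def elim!: oddE)
    obtain A where A: "\<And>m. m \<ge> 1 \<Longrightarrow> \<bar>mu_central N m\<bar> \<le> A * m ^ (N div 2)"
      using mu_bound[of N] by auto
    show ?thesis
    proof (intro exI[of _ "C1 + \<bar>A\<bar> * \<bar>binom_r r N\<bar>"] allI impI)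
      fix m :: real assume m: "m \<ge> 1"
      define t where "t = (-1) ^ N * mu_central N m / (m + 1) ^ N * binom_r r N"
      have "Df N m = Df (2*J) m + t" unfolding NJ Df_def t_def by simp
      moreover have "\<bar>t\<bar> \<le> \<bar>A\<bar> * \<bar>binom_r r N\<bar> / m ^ J"
      proof -
        have "\<bar>t\<bar> = \<bar>mu_central N m\<bar> / (m + 1) ^ N * \<bar>binom_r r N\<bar>"
          using m by (simp add: t_def abs_mult)
        also have "\<dots> \<le> (\<bar>A\<bar> * m ^ (N div 2)) / (m + 1) ^ N * \<bar>binom_r r N\<bar>"
          using A[OF m] m by (intro mult_right_mono divide_right_mono)
            (auto intro: order.trans[OF _ mult_right_mono[of A "\<bar>A\<bar>"]])
        also have "\<dots> = \<bar>A\<bar> * \<bar>binom_r r N\<bar> * (m ^ (N div 2) / (m + 1) ^ N)" by simp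
        also have "\<dots> \<le> \<bar>A\<bar> * \<bar>binom_r r N\<bar> * (1 / m ^ J)"
          by (intro mult_left_mono aux3[OF m pJ]) auto
        finally show ?thesis by simp
      qed
      ultimately have "\<bar>Df N m\<bar> \<le> C1 / m ^ J + \<bar>A\<bar> * \<bar>binom_r r N\<bar> / m ^ J"
        using C1[OF m] by linarith
      then show "\<bar>Df N m\<bar> \<le> (C1 + \<bar>A\<bar> * \<bar>binom_r r N\<bar>) / m ^ J"
        by (simp add: add_divide_distrib)
    qed
  qed
  then obtain C where C: "\<And>m. m \<ge> 1 \<Longrightarrow> \<bar>Df N m\<bar> \<le> C / m ^ J" by auto
  have "Df N \<in> O[at_top](\<lambda>m. m powr (- real J))"
  proof (rule bigoI[where c = C])
    show "\<forall>\<^sub>F m in at_top. norm (Df N m) \<le> C * norm (m powr (- real J))"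
      using eventually_ge_at_top[of "1::real"]
    proof eventually_elim
      case (elim m)
      have "m powr (- real J) = 1 / m ^ J"
        using elim by (simp add: powr_minus powr_realpow divide_inverse)
      then show ?case using C[OF elim] elim by simp
    qed
  qed
  then show ?thesis unfolding ceil_half J_def[symmetric] Df_def .
qed

end
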